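(* Let $A$ be a quasi-quantale and let $j$ be a contextual nucleus on $A$. Let $A_j=\{a\in A\mid j(a)=a\}$, which is a complete lattice whose join of $X\subseteq A_j$ is $\bigvee^j X=j(\bigvee X)$, and define on $A_j$ the operation $a\cdot b=j(ab)$. Then $(A_j,\cdot)$ is a quasi-quantale. If moreover $A$ is a left-unital quasi-quantale with identity $e$ (i.e. $ea=a$ for all $a\in A$), then $A_j$ is a left-unital quasi-quantale with identity $j(e)$.
   Context: A quasi-quantale is a complete lattice $A$ equipped with an associative binary operation $(a,b)\mapsto ab$ such that for every directed subset $X\subseteq A$ (non-empty, and any two elements of $X$ have an upper bound in $X$) and every $a\in A$: $(\bigvee X)a=\bigvee\{xa\mid x\in X\}$ and $a(\bigvee X)=\bigvee\{ax\mid x\in X\}$. An inflator on $A$ is a monotone map $s\colon A\to A$ with $a\leq s(a)$ for all $a$. A contextual nucleus is an inflator $j$ with $j\circ j=j$ and $j(a)j(b)\leq j(ab)$ for all $a,b\in A$. *)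

theory Defs
  imports Main
begin

definition directed :: "'a::order set \<Rightarrow> bool" where
  "directed X \<longleftrightarrow> X \<noteq> {} \<and> (\<forall>x\<in>X. \<forall>y\<in>X. \<exists>z\<in>X. x \<le> z \<and> y \<le> z)"

definition quasi_quantale_on ::
  "'a::complete_lattice set \<Rightarrow> ('a set \<Rightarrow> 'a) \<Rightarrow> ('a \<Rightarrow> 'a \<Rightarrow> 'a) \<Rightarrow> bool" where
  "quasi_quantale_on S J m \<longleftrightarrow>
     (\<forall>X. X \<subseteq> S \<longrightarrow> J X \<in> S \<and> (\<forall>x\<in>X. x \<le> J X)
                      \<and> (\<forall>u\<in>S. (\<forall>x\<in>X. x \<le> u) \<longrightarrow> J X \<le> u)) \<and>
     (\<forall>a\<in>S. \<forall>b\<in>S. m a b \<in> S) \<and>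
     (\<forall>a\<in>S. \<forall>b\<in>S. \<forall>c\<in>S. m (m a b) c = m a (m b c)) \<and>
     (\<forall>X a. X \<subseteq> S \<and> directed X \<and> a \<in> S \<longrightarrow>
        m (J X) a = J ((\<lambda>x. m x a) ` X) \<and> m a (J X) = J ((\<lambda>x. m a x) ` X))"

definition quasi_quantale :: "('a::complete_lattice \<Rightarrow> 'a \<Rightarrow> 'a) \<Rightarrow> bool" where
  "quasi_quantale m \<longleftrightarrow>
     (\<forall>a b c. m (m a b) c = m a (m b c)) \<and>
     (\<forall>X a. directed X \<longrightarrow>
        m (Sup X) a = Sup ((\<lambda>x. m x a) ` X) \<and> m a (Sup X) = Sup ((\<lambda>x. m a x) ` X))"

definition inflator :: "('a::order \<Rightarrow> 'a) \<Rightarrow> bool" where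
  "inflator s \<longleftrightarrow> mono s \<and> (\<forall>a. a \<le> s a)"

definition contextual_nucleus :: "('a::order \<Rightarrow> 'a \<Rightarrow> 'a) \<Rightarrow> ('a \<Rightarrow> 'a) \<Rightarrow> bool" where
  "contextual_nucleus m j \<longleftrightarrow> inflator j \<and> j \<circ> j = j \<and> (\<forall>a b. m (j a) (j b) \<le> j (m a b))"

definition left_unital_on :: "'a set \<Rightarrow> ('a \<Rightarrow> 'a \<Rightarrow> 'a) \<Rightarrow> 'a \<Rightarrow> bool" where
  "left_unital_on S m e \<longleftrightarrow> e \<in> S \<and> (\<forall>a\<in>S. m e a = a)"

end

theory Submission
  imports Defs
begin

lemma mono_m:
  assumes q: "quasi_quantale m" and le: "x \<le> y"
  shows "m x a \<le> m y a" and "m a x \<le> m a y"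
proof -
  have d: "directed {x, y}" unfolding directed_def using le by auto
  have s: "Sup {x, y} = y" using le by (simp add: sup_absorb2)
  have "m (Sup {x,y}) a = Sup ((\<lambda>z. m z a) ` {x,y}) \<and> m a (Sup {x,y}) = Sup ((\<lambda>z. m a z) ` {x,y})"
    using q d unfolding quasi_quantale_def by blast
  then have "m y a = sup (m x a) (m y a)" "m a y = sup (m a x) (m a y)" using s by simp_all
  then show "m x a \<le> m y a" "m a x \<le> m a y" by (metis sup.cobounded1)+
qed

theorem proposition3p9:
  fixes m :: "'a::complete_lattice \<Rightarrow> 'a \<Rightarrow> 'a" and j :: "'a \<Rightarrow> 'a"
  assumes "quasi_quantale m" and "contextual_nucleus m j"
  shows "quasi_quantale_on {a. j a = a} (\<lambda>X. j (Sup X)) (\<lambda>a b. j (m a b)) \<and>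
           (\<forall>e. left_unital_on UNIV m e \<longrightarrow>
           quasi_quantale_on {a. j a = a} (\<lambda>X. j (Sup X)) (\<lambda>a b. j (m a b)) \<and>
           left_unital_on {a. j a = a} (\<lambda>a b. j (m a b)) (j e))"
proof -
  have q: "quasi_quantale m" by fact
  have jm: "mono j" and ji: "\<And>a. a \<le> j a" and jj: "\<And>a. j (j a) = j a"
    and jmul: "\<And>a b. m (j a) (j b) \<le> j (m a b)"
    using assms(2) unfolding contextual_nucleus_def inflator_def by (auto simp: fun_eq_iff)
  have assoc: "\<And>a b c. m (m a b) c = m a (m b c)" using q unfolding quasi_quantale_def by blast
  have L: "j (m (j x) c) = j (m x c)" if "j c = c" for x c
  proof (rule antisym)
    have "m (j x) c \<le> j (m x c)" using jmul[of x c] that by simp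
    then show "j (m (j x) c) \<le> j (m x c)" using jm jj by (metis monoD)
    show "j (m x c) \<le> j (m (j x) c)" using jm mono_m(1)[OF q ji] by (metis monoD)
  qed
  have R: "j (m c (j x)) = j (m c x)" if "j c = c" for x c
  proof (rule antisym)
    have "m c (j x) \<le> j (m c x)" using jmul[of c x] that by simp
    then show "j (m c (j x)) \<le> j (m c x)" using jm jj by (metis monoD)
    show "j (m c x) \<le> j (m c (j x))" using jm mono_m(2)[OF q ji] by (metis monoD)
  qed
  have JS: "j (Sup (j ` Y)) = j (Sup Y)" for Y
  proof (rule antisym)
    have "Sup (j ` Y) \<le> j (Sup Y)"
      by (rule Sup_least) (use jm in \<open>auto intro: monoD Sup_upper\<close>)
    then show "j (Sup (j ` Y)) \<le> j (Sup Y)" using jm jj by (metis monoD)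
    have "Sup Y \<le> Sup (j ` Y)" by (rule Sup_mono) (use ji in blast)
    then show "j (Sup Y) \<le> j (Sup (j ` Y))" using jm by (metis monoD)
  qed
  have qd: "\<And>X a. directed X \<Longrightarrow> m (Sup X) a = Sup ((\<lambda>x. m x a) ` X) \<and> m a (Sup X) = Sup ((\<lambda>x. m a x) ` X)"
    using q unfolding quasi_quantale_def by blast
  have QQ1: "\<forall>X. X \<subseteq> {a. j a = a} \<longrightarrow> j (Sup X) \<in> {a. j a = a} \<and> (\<forall>x\<in>X. x \<le> j (Sup X))
                      \<and> (\<forall>u\<in>{a. j a = a}. (\<forall>x\<in>X. x \<le> u) \<longrightarrow> j (Sup X) \<le> u)"
  proof (intro allI impI conjI ballI)
    fix X :: "'a set"
    show "j (Sup X) \<in> {a. j a = a}" using jj by simp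
    fix x assume "x \<in> X" then show "x \<le> j (Sup X)" by (rule order_trans[OF Sup_upper ji])
  next
    fix X :: "'a set" and u assume u: "u \<in> {a. j a = a}"
      and ub: "\<forall>x\<in>X. x \<le> u"
    have "Sup X \<le> u" using ub by (simp add: Sup_least)
    then have "j (Sup X) \<le> j u" using jm by (rule monoD[rotated])
    then show "j (Sup X) \<le> u" using u by simp
  qed
  have QQ2: "\<forall>a\<in>{a. j a = a}. \<forall>b\<in>{a. j a = a}. j (m a b) \<in> {a. j a = a}" using jj by simp
  have QQ3: "\<forall>a\<in>{a. j a = a}. \<forall>b\<in>{a. j a = a}. \<forall>c\<in>{a. j a = a}.
      j (m (j (m a b)) c) = j (m a (j (m b c)))"
  proof (intro ballI)
    fix a b c assume "a \<in> {a. j a = a}" "b \<in> {a. j a = a}" "c \<in> {a. j a = a}"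
    then have c: "j c = c" and a: "j a = a" by auto
    have "j (m (j (m a b)) c) = j (m (m a b) c)" by (rule L[OF c])
    also have "\<dots> = j (m a (m b c))" by (simp only: assoc)
    also have "\<dots> = j (m a (j (m b c)))" by (rule R[OF a, symmetric])
    finally show "j (m (j (m a b)) c) = j (m a (j (m b c)))" .
  qed
  have QQ4: "\<forall>X a. X \<subseteq> {a. j a = a} \<and> directed X \<and> a \<in> {a. j a = a} \<longrightarrow>
        j (m (j (Sup X)) a) = j (Sup ((\<lambda>x. j (m x a)) ` X)) \<and> j (m a (j (Sup X))) = j (Sup ((\<lambda>x. j (m a x)) ` X))"
  proof (intro allI impI conjI)
    fix X a assume H: "X \<subseteq> {a. j a = a} \<and> directed X \<and> a \<in> {a. j a = a}"
    then have d: "directed X" and a: "j a = a" by auto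
    have "j (m (j (Sup X)) a) = j (m (Sup X) a)" by (rule L[OF a])
    also have "\<dots> = j (Sup ((\<lambda>x. m x a) ` X))" using qd[OF d] by simp
    also have "\<dots> = j (Sup (j ` (\<lambda>x. m x a) ` X))" by (rule JS[symmetric])
    also have "j ` (\<lambda>x. m x a) ` X = (\<lambda>x. j (m x a)) ` X" by (simp add: image_image)
    finally show "j (m (j (Sup X)) a) = j (Sup ((\<lambda>x. j (m x a)) ` X))" .
    have "j (m a (j (Sup X))) = j (m a (Sup X))" by (rule R[OF a])
    also have "\<dots> = j (Sup ((\<lambda>x. m a x) ` X))" using qd[OF d] by simp
    also have "\<dots> = j (Sup (j ` (\<lambda>x. m a x) ` X))" by (rule JS[symmetric])
    also have "j ` (\<lambda>x. m a x) ` X = (\<lambda>x. j (m a x)) ` X" by (simp add: image_image)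
    finally show "j (m a (j (Sup X))) = j (Sup ((\<lambda>x. j (m a x)) ` X))" .
  qed
  have QQ: "quasi_quantale_on {a. j a = a} (\<lambda>X. j (Sup X)) (\<lambda>a b. j (m a b))"
    unfolding quasi_quantale_on_def using QQ1 QQ2 QQ3 QQ4 by (intro conjI)
  show ?thesis
  proof (intro conjI allI impI QQ)
    fix e assume "left_unital_on UNIV m e"
    then have e: "\<And>a. m e a = a" unfolding left_unital_on_def by auto
    show "left_unital_on {a. j a = a} (\<lambda>a b. j (m a b)) (j e)"
      unfolding left_unital_on_def
    proof (intro conjI ballI)
      show "j e \<in> {a. j a = a}" using jj by simp
      fix a assume "a \<in> {a. j a = a}"
      then have a: "j a = a" by simp
      show "j (m (j e) a) = a" using L[OF a, of e] e[of a] a by simp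
    qed
  qed
qed

end
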